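(* Let $K_1, K_2, K_3 > 0$ and $h_c \in (0,\infty)$, and set $L_j = K_j \tanh(K_j h_c)$ for $j=1,2,3$. Let $\Omega_1 = \sqrt{L_1}$, $\Omega_2 = \sqrt{L_2}$, $\Omega_3 = -\sqrt{L_3}$, and suppose $\Omega_1 + \Omega_2 + \Omega_3 = 0$. Define $$\beta = \sum_{l=1}^3 \Omega_l K_l^2 - \frac{1}{2}\Omega_1\Omega_2\Omega_3\big(\Omega_1^2 + \Omega_2^2 + \Omega_3^2\big).$$ Then $\beta < 0$.
   Context: Here $K_j$ are wavenumbers of three linear wave modes in a cylinder of depth $h_c$, $\Omega_j$ are signed angular frequencies satisfying the finite-depth dispersion relation $\Omega_j^2 = K_j\tanh(K_j h_c)$, and the condition $\Omega_1+\Omega_2+\Omega_3=0$ expresses exact triad resonance at depth $h_c$. The quantity $\beta$ enters the triad interaction coefficients $\alpha_j = \mathscr{C}\beta/(2\Omega_j)$. *)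

theory Defs
  imports Complex_Main
begin

end

theory Submission
  imports Defs
begin

lemma sech_bound:
  fixes x :: real
  assumes "x \<ge> 0"
  shows "x * (1 - tanh x ^ 2) < 4"
proof -
  define E where "E = exp (- 2 * x)"
  have Epos: "E > 0" unfolding E_def by simp
  have t: "tanh x = (1 - E) / (1 + E)" unfolding E_def by (rule tanh_real_altdef)
  have "1 - tanh x ^ 2 = 4 * E / (1 + E)^2"
  proof -
    have p: "1 + E \<noteq> 0" "(1 + E)^2 \<noteq> 0" using Epos by auto
    have "1 - tanh x ^ 2 = 1 - ((1 - E) / (1 + E))^2" by (simp add: t)
    also have "\<dots> = 4 * E / (1 + E)^2" using p
      by (simp add: field_simps power2_eq_square)
    finally show ?thesis .
  qed
  also have "\<dots> \<le> 4 * E / 1"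
  proof (rule divide_left_mono)
    show "1 \<le> (1 + E)^2" using Epos by (intro one_le_power) simp
  qed (use Epos in auto)
  finally have a: "1 - tanh x ^ 2 \<le> 4 * E" by simp
  have "exp (2 * x) \<ge> 1 + 2 * x" by (rule exp_ge_add_one_self_aux) (use assms in simp)
  moreover have "E * exp (2 * x) = 1" unfolding E_def by (simp add: exp_add[symmetric])
  ultimately have "E * (1 + 2 * x) \<le> 1" using Epos
    by (metis less_imp_le mult_left_mono)
  hence "E + 2 * (x * E) \<le> 1" by (simp add: algebra_simps)
  moreover have "x * E \<ge> 0" using assms Epos by simp
  ultimately have "x * E < 1" using Epos by linarith
  hence "x * (4 * E) < 4" by simp
  moreover have "x * (1 - tanh x ^ 2) \<le> x * (4 * E)" using a assms by (rule mult_left_mono)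
  ultimately show ?thesis by simp
qed

lemma psi_mono:
  fixes h k1 k3 :: real
  assumes "h > 0" "0 < k1" "k1 < k3"
  shows "k1^2 - (k1 * tanh (k1*h))^2/5 < k3^2 - (k3 * tanh (k3*h))^2/5"
proof (rule DERIV_pos_imp_increasing[OF assms(3)])
  fix k assume k: "k1 \<le> k" "k \<le> k3"
  hence kp: "k > 0" using assms by simp
  define t where "t = tanh (k*h)"
  have d: "((\<lambda>k. k^2 - (k * tanh (k*h))^2/5) has_real_derivative
     (2*k - 2/5*(k*t)*(t + k*h*(1 - t^2)))) (at k)"
    unfolding t_def
    by (rule derivative_eq_intros refl | simp)+
  have t1: "t < 1" "t \<ge> 0" unfolding t_def using kp assms by (auto simp: tanh_real_lt_1)
  have sb: "(k*h) * (1 - t^2) < 4" unfolding t_def by (rule sech_bound) (use kp assms in simp)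
  have t2: "t^2 < 1" using t1 by (simp add: abs_square_less_1)
  have "0 \<le> (k*h) * (1 - t^2)" using t2 kp assms by simp
  hence "t * ((k*h) * (1 - t^2)) \<le> (k*h) * (1 - t^2)"
    using t1 by (intro mult_left_le_one_le) auto
  hence "5 - t^2 - t*(k*h*(1-t^2)) > 0" using sb t2 by (simp add: mult.assoc)
  hence "2*k/5 * (5 - t^2 - t*(k*h*(1-t^2))) > 0" using kp by simp
  moreover have "2*k - 2/5*(k*t)*(t + k*h*(1 - t^2)) = 2*k/5 * (5 - t^2 - t*(k*h*(1-t^2)))"
    by (simp add: field_simps power2_eq_square)
  ultimately show "\<exists>y. ((\<lambda>k. k^2 - (k * tanh (k*h))^2/5) has_real_derivative y) (at k) \<and> y > 0"
    using d by auto
qed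

lemma Lmono:
  fixes h k1 k3 :: real
  assumes "h > 0" "0 < k1" "k3 \<le> k1" "0 < k3"
  shows "k3 * tanh (k3*h) \<le> k1 * tanh (k1*h)"
  using assms by (intro mult_mono) (auto intro: mult_right_mono)

theorem mainTheorem2:
  fixes K1 K2 K3 h\<^sub>c :: real
  assumes "K1 > 0" and "K2 > 0" and "K3 > 0" and "h\<^sub>c > 0"
  defines "L1 \<equiv> K1 * tanh (K1 * h\<^sub>c)"
      and "L2 \<equiv> K2 * tanh (K2 * h\<^sub>c)"
      and "L3 \<equiv> K3 * tanh (K3 * h\<^sub>c)"
  defines "\<Omega>1 \<equiv> sqrt L1" and "\<Omega>2 \<equiv> sqrt L2" and "\<Omega>3 \<equiv> - sqrt L3"
  assumes "\<Omega>1 + \<Omega>2 + \<Omega>3 = 0"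
  defines "\<beta> \<equiv> (\<Omega>1 * K1\<^sup>2 + \<Omega>2 * K2\<^sup>2 + \<Omega>3 * K3\<^sup>2)
                 - 1/2 * \<Omega>1 * \<Omega>2 * \<Omega>3 * (\<Omega>1\<^sup>2 + \<Omega>2\<^sup>2 + \<Omega>3\<^sup>2)"
  shows "\<beta> < 0"
proof -
  have L1p: "L1 > 0" and L2p: "L2 > 0" and L3p: "L3 > 0"
    using assms(1-4) unfolding L1_def L2_def L3_def by auto
  define a where "a = \<Omega>1"
  define b where "b = \<Omega>2"
  have ap: "a > 0" and bp: "b > 0" using L1p L2p by (auto simp: a_def b_def \<Omega>1_def \<Omega>2_def)
  have c: "sqrt L3 = a + b" using \<open>\<Omega>1 + \<Omega>2 + \<Omega>3 = 0\<close> unfolding a_def b_def \<Omega>3_def by linarith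
  have La: "L1 = a^2" using L1p by (simp add: a_def \<Omega>1_def)
  have Lb: "L2 = b^2" using L2p by (simp add: b_def \<Omega>2_def)
  have Lc: "L3 = (a+b)^2" using L3p c by (metis real_sqrt_pow2 less_imp_le)
  have K13: "K1 < K3"
  proof (rule ccontr)
    assume "\<not> K1 < K3"
    hence "L3 \<le> L1" unfolding L1_def L3_def using assms(1-4) by (intro Lmono) auto
    hence "(a+b)^2 \<le> a^2" using La Lc by simp
    moreover have "0 < b*b" "0 < a*b" "0 < a*a" using ap bp by simp_all
    ultimately show False by (simp add: power2_eq_square algebra_simps)
  qed
  have K23: "K2 < K3"
  proof (rule ccontr)
    assume "\<not> K2 < K3"
    hence "L3 \<le> L2" unfolding L2_def L3_def using assms(1-4) by (intro Lmono) auto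
    hence "(a+b)^2 \<le> b^2" using Lb Lc by simp
    moreover have "0 < b*b" "0 < a*b" "0 < a*a" using ap bp by simp_all
    ultimately show False by (simp add: power2_eq_square algebra_simps)
  qed
  define p1 where "p1 = K1^2 - L1^2/5"
  define p2 where "p2 = K2^2 - L2^2/5"
  define p3 where "p3 = K3^2 - L3^2/5"
  have "p1 < p3" unfolding p1_def p3_def L1_def L3_def
    using psi_mono[OF assms(4) assms(1) K13] by simp
  moreover have "p2 < p3" unfolding p2_def p3_def L2_def L3_def
    using psi_mono[OF assms(4) assms(2) K23] by simp
  ultimately have neg: "a*(p1-p3) + b*(p2-p3) < 0" using ap bp
    by (simp add: add_neg_neg mult_pos_neg)
  have K1e: "K1^2 = p1 + a^4/5" unfolding p1_def La by simp
  have K2e: "K2^2 = p2 + b^4/5" unfolding p2_def Lb by simp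
  have K3e: "K3^2 = p3 + (a+b)^4/5" unfolding p3_def Lc by simp
  have "\<beta> = a * K1^2 + b * K2^2 - (a+b) * K3^2 + 1/2 * a * b * (a+b) * (a^2 + b^2 + (a+b)^2)"
    unfolding \<beta>_def \<Omega>3_def c a_def[symmetric] b_def[symmetric]
    by (simp add: field_simps power2_eq_square)
  also have "\<dots> = a*(p1-p3) + b*(p2-p3)"
    unfolding K1e K2e K3e by (simp add: power2_eq_square power4_eq_xxxx field_simps)
  finally show ?thesis using neg by simp
qed

end
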